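(* Let $$\Gamma=\left\langle\mathbb{Z}^3,\left(0,\begin{pmatrix}1&-1&0\\0&-1&0\\0&0&-1\end{pmatrix}\right)\right\rangle\subseteq\mathrm{Aff}(\mathbb{R}^3),$$ with holonomy group $F\subseteq\mathrm{GL}_3(\mathbb{Z})$ (of order $2$, generated by the displayed matrix), and let $\varphi=\xi_{(d,D)}\in\mathrm{Aut}(\Gamma)$. Define $\delta=1$ if the third component $d_3$ of $d$ is an integer and $\delta=0$ otherwise. Then $$R(\varphi)=\left(\frac12\sum_{A\in F}|\det(I_3-AD)|_\infty\right)+4\delta.$$
   Context: $\mathrm{Aff}(\mathbb{R}^3)=\mathbb{R}^3\rtimes\mathrm{GL}_3(\mathbb{R})$ with multiplication $(d_1,D_1)(d_2,D_2)=(d_1+D_1d_2,D_1D_2)$; $\mathbb{Z}^3$ denotes $\{(z,I_3)\mid z\in\mathbb{Z}^3\}$. For $(d,D)\in\mathrm{Aff}(\mathbb{R}^3)$, $\xi_{(d,D)}$ denotes $\gamma\mapsto(d,D)\gamma(d,D)^{-1}$; every automorphism of $\Gamma$ has this form (and $d$ is uniquely determined by the automorphism). $R(\varphi)\in\{1,2,\dots\}\cup\{\infty\}$ is the number of classes of the relation $g\sim g'\iff\exists h\in\Gamma: g=hg'\varphi(h)^{-1}$. For an integer $x$, $|x|_\infty=|x|$ if $x\neq0$ and $\infty$ if $x=0$. *)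

theory Defs
  imports "HOL-Analysis.Analysis" "HOL-Library.Extended_Real"
begin

text \<open>Elements of Aff(R^3) are pairs (d, D) with d a translation vector and D a 3x3 matrix
  (invertibility is imposed where needed).\<close>
type_synonym aff3 = "(real^3) \<times> (real^3^3)"

definition aff_mul :: "aff3 \<Rightarrow> aff3 \<Rightarrow> aff3" where
  "aff_mul g h = (fst g + snd g *v fst h, snd g ** snd h)"

definition aff_inv :: "aff3 \<Rightarrow> aff3" where
  "aff_inv g = (- (matrix_inv (snd g) *v fst g), matrix_inv (snd g))"

definition aff_one :: aff3 where
  "aff_one = (0, mat 1)"

definition Aff3 :: "aff3 set" where
  "Aff3 = {g. invertible (snd g)}"

definition xi :: "aff3 \<Rightarrow> aff3 \<Rightarrow> aff3" where
  "xi g \<gamma> = aff_mul (aff_mul g \<gamma>) (aff_inv g)"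

inductive_set gen_subgroup :: "aff3 set \<Rightarrow> aff3 set" for S where
  one: "aff_one \<in> gen_subgroup S"
| base: "x \<in> S \<Longrightarrow> x \<in> gen_subgroup S"
| mul: "x \<in> gen_subgroup S \<Longrightarrow> y \<in> gen_subgroup S \<Longrightarrow> aff_mul x y \<in> gen_subgroup S"
| inv: "x \<in> gen_subgroup S \<Longrightarrow> aff_inv x \<in> gen_subgroup S"

definition Z3 :: "aff3 set" where
  "Z3 = {(z, mat 1) | z. \<forall>i. z $ i \<in> \<int>}"

definition A0 :: "real^3^3" where
  "A0 = vector [vector [1, -1, 0], vector [0, -1, 0], vector [0, 0, -1]]"

definition Gamma :: "aff3 set" where
  "Gamma = gen_subgroup (Z3 \<union> {(0, A0)})"

definition holonomy :: "aff3 set \<Rightarrow> (real^3^3) set" where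
  "holonomy G = snd ` G"

definition reid_rel :: "aff3 set \<Rightarrow> (aff3 \<Rightarrow> aff3) \<Rightarrow> (aff3 \<times> aff3) set" where
  "reid_rel G \<phi> = {(g, g'). g \<in> G \<and> g' \<in> G \<and>
      (\<exists>h\<in>G. g = aff_mul (aff_mul h g') (aff_inv (\<phi> h)))}"

definition reidemeister_number :: "aff3 set \<Rightarrow> (aff3 \<Rightarrow> aff3) \<Rightarrow> enat" where
  "reidemeister_number G \<phi> =
     (if finite (G // reid_rel G \<phi>) then enat (card (G // reid_rel G \<phi>)) else \<infinity>)"

definition abs_inf :: "real \<Rightarrow> ereal" where
  "abs_inf x = (if x = 0 then \<infinity> else ereal \<bar>x\<bar>)"

end

theory Submission
  imports Defs
begin

lemma quot_transfer:
  assumes img: "f ` S = T" and rS: "r \<subseteq> S \<times> S" and rT: "r' \<subseteq> T \<times> T"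
    and iff: "\<And>x y. x\<in>S \<Longrightarrow> y\<in>S \<Longrightarrow> (x,y)\<in>r \<longleftrightarrow> (f x, f y) \<in> r'"
  shows "bij_betw (\<lambda>C. f ` C) (S//r) (T//r')"
proof -
  have cls: "f ` (r``{x}) = r'``{f x}" if "x \<in> S" for x
  proof
    show "f ` (r``{x}) \<subseteq> r'``{f x}" using iff that rS by auto
    show "r'``{f x} \<subseteq> f ` (r``{x})"
    proof
      fix z assume "z \<in> r'``{f x}"
      then have "(f x, z) \<in> r'" "z \<in> T" using rT by auto
      then obtain y where "y \<in> S" "z = f y" using img by auto
      then show "z \<in> f ` (r``{x})" using iff that \<open>(f x, z) \<in> r'\<close> by auto
    qed
  qed
  show ?thesis unfolding bij_betw_def
  proof
    show "inj_on ((`) f) (S // r)"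
    proof (rule inj_onI)
      fix C1 C2 assume "C1 \<in> S//r" "C2 \<in> S//r" "f ` C1 = f ` C2"
      then obtain x1 x2 where x: "x1 \<in> S" "x2 \<in> S" "C1 = r``{x1}" "C2 = r``{x2}"
        by (auto elim!: quotientE)
      then have e: "r'``{f x1} = r'``{f x2}" using cls \<open>f ` C1 = f ` C2\<close> by auto
      show "C1 = C2"
      proof -
        have "(x1,y) \<in> r \<longleftrightarrow> (x2,y) \<in> r" for y
        proof (cases "y \<in> S")
          case True
          have "(f x1, f y) \<in> r' \<longleftrightarrow> (f x2, f y) \<in> r'" using e by blast
          then show ?thesis using iff x True by blast
        next
          case False then show ?thesis using rS by auto
        qed
        then show ?thesis using x by auto
      qed
    qed
    show "(`) f ` (S // r) = T // r'"
    proof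
      show "(`) f ` (S // r) \<subseteq> T // r'"
        using cls img by (auto elim!: quotientE intro!: quotientI)
      show "T // r' \<subseteq> (`) f ` (S // r)"
      proof
        fix C assume "C \<in> T//r'"
        then obtain t where "t \<in> T" "C = r'``{t}" by (auto elim!: quotientE)
        then obtain x where "x \<in> S" "t = f x" using img by auto
        then show "C \<in> (`) f ` (S // r)" using cls \<open>C = r'``{t}\<close>
          by (auto intro!: quotientI image_eqI[where x="r``{x}"])
      qed
    qed
  qed
qed

lemma quot_transfer_card:
  assumes "f ` S = T" "r \<subseteq> S \<times> S" "r' \<subseteq> T \<times> T"
    "\<And>x y. x\<in>S \<Longrightarrow> y\<in>S \<Longrightarrow> (x,y)\<in>r \<longleftrightarrow> (f x, f y) \<in> r'"
  shows "card (S//r) = card (T//r')" "finite (S//r) \<longleftrightarrow> finite (T//r')"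
  using quot_transfer[OF assms] bij_betw_same_card bij_betw_finite by blast+

lemma quot_union:
  assumes disj: "S1 \<inter> S2 = {}" and rs: "r \<subseteq> S1\<times>S1 \<union> S2\<times>S2"
    and rfl: "\<And>x. x \<in> S1 \<union> S2 \<Longrightarrow> (x,x) \<in> r"
  shows "(S1 \<union> S2)//r = S1//(r \<inter> S1\<times>S1) \<union> S2//(r \<inter> S2\<times>S2)"
    and "S1//(r \<inter> S1\<times>S1) \<inter> S2//(r \<inter> S2\<times>S2) = {}"
proof -
  have c1: "r``{x} = (r \<inter> S1\<times>S1)``{x}" if "x \<in> S1" for x
    using that rs disj by auto
  have c2: "r``{x} = (r \<inter> S2\<times>S2)``{x}" if "x \<in> S2" for x
    using that rs disj by auto
  show "(S1 \<union> S2)//r = S1//(r \<inter> S1\<times>S1) \<union> S2//(r \<inter> S2\<times>S2)"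
    unfolding quotient_def using c1 c2 by blast
  show "S1//(r \<inter> S1\<times>S1) \<inter> S2//(r \<inter> S2\<times>S2) = {}"
  proof (rule ccontr)
    assume "S1 // (r \<inter> S1 \<times> S1) \<inter> S2 // (r \<inter> S2 \<times> S2) \<noteq> {}"
    then obtain x1 x2 where x: "x1 \<in> S1" "x2 \<in> S2" "(r \<inter> S1\<times>S1)``{x1} = (r \<inter> S2\<times>S2)``{x2}"
      unfolding quotient_def by blast
    have "x1 \<in> (r \<inter> S1\<times>S1)``{x1}" using rfl x by auto
    then have "x1 \<in> S2" using x by auto
    then show False using disj x by auto
  qed
qed

lemma invol_orbits:
  assumes fin: "finite X" and cl: "\<And>x. x\<in>X \<Longrightarrow> \<sigma> x \<in> X" and inv: "\<And>x. x\<in>X \<Longrightarrow> \<sigma>(\<sigma> x) = x"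
  shows "2 * card (X//{(x,y). x\<in>X \<and> y\<in>X \<and> (y = x \<or> y = \<sigma> x)}) = card X + card {x\<in>X. \<sigma> x = x}"
proof -
  let ?r = "{(x,y). x\<in>X \<and> y\<in>X \<and> (y = x \<or> y = \<sigma> x)}"
  define F where "F = {x\<in>X. \<sigma> x = x}"
  define N where "N = X - F"
  have cls: "?r``{x} = {x, \<sigma> x}" if "x \<in> X" for x using that cl by auto
  have Q: "X//?r = (\<lambda>x. {x}) ` F \<union> (\<lambda>x. {x, \<sigma> x}) ` N"
    unfolding quotient_def F_def N_def using cls by auto
  have finF: "finite F" "finite N" using fin unfolding F_def N_def by auto
  have d: "(\<lambda>x. {x}) ` F \<inter> (\<lambda>x. {x, \<sigma> x}) ` N = {}"
    unfolding F_def N_def by (auto simp: doubleton_eq_iff)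
  have cF: "card ((\<lambda>x. {x}) ` F) = card F" by (rule card_image) (auto simp: inj_on_def)
  have NN: "\<sigma> x \<in> N" if "x \<in> N" for x using that cl inv unfolding N_def F_def by force
  have "2 * card ((\<lambda>x. {x, \<sigma> x}) ` N) = card (\<Union>((\<lambda>x. {x, \<sigma> x}) ` N))"
  proof (rule card_partition)
    show "finite ((\<lambda>x. {x, \<sigma> x}) ` N)" using finF by auto
    show "finite (\<Union> ((\<lambda>x. {x, \<sigma> x}) ` N))" using finF by auto
    show "\<And>c. c \<in> (\<lambda>x. {x, \<sigma> x}) ` N \<Longrightarrow> card c = 2"
      unfolding N_def F_def by (auto simp: card_insert_if split: if_split_asm)
    show "\<And>c1 c2. c1 \<in> (\<lambda>x. {x, \<sigma> x}) ` N \<Longrightarrow> c2 \<in> (\<lambda>x. {x, \<sigma> x}) ` N \<Longrightarrow> c1 \<noteq> c2 \<Longrightarrow> c1 \<inter> c2 = {}"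
      unfolding N_def using inv by (auto, metis+)
  qed
  moreover have "\<Union>((\<lambda>x. {x, \<sigma> x}) ` N) = N" using NN by auto
  moreover have "card N = card X - card F" "card F \<le> card X"
    unfolding N_def F_def using fin by (auto intro: card_Diff_subset card_mono)
  ultimately show ?thesis
    unfolding Q using card_Un_disjoint[OF _ _ d] finF cF F_def
    by (simp add: finite_imageI)
qed

lemma trans_count:
  fixes c :: "'a \<Rightarrow> 'a \<Rightarrow> bool" and \<sigma> :: "'a \<Rightarrow> 'a"
  assumes crefl: "\<And>z. c z z" and csym: "\<And>z z'. c z z' \<Longrightarrow> c z' z"
    and ctrans: "\<And>x y z. c x y \<Longrightarrow> c y z \<Longrightarrow> c x z"
    and sc: "\<And>z z'. c z z' \<Longrightarrow> c (\<sigma> z) (\<sigma> z')" and inv: "\<And>z. \<sigma> (\<sigma> z) = z"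
    and fin: "finite R" and ex: "\<And>z. \<exists>p\<in>R. c z p"
    and uniq: "\<And>p q. p\<in>R \<Longrightarrow> q\<in>R \<Longrightarrow> c p q \<Longrightarrow> p = q"
  shows "finite (UNIV // {(z,z'). c z z' \<or> c z (\<sigma> z')})"
    and "2 * card (UNIV // {(z,z'). c z z' \<or> c z (\<sigma> z')}) = card R + card {p\<in>R. c (\<sigma> p) p}"
proof -
  define g where "g z = (SOME p. p\<in>R \<and> c z p)" for z
  have g: "g z \<in> R \<and> c z (g z)" for z
    unfolding g_def using someI_ex[of "\<lambda>p. p\<in>R \<and> c z p"] ex by blast
  have gR: "g p = p" if "p \<in> R" for p using uniq[of "g p" p] g[of p] that csym by blast
  have geq: "c z z' \<longleftrightarrow> g z = g z'" for z z'
  proof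
    assume "c z z'"
    then have "c (g z) (g z')" using g csym ctrans by meson
    then show "g z = g z'" using uniq g by blast
  next
    assume "g z = g z'"
    then show "c z z'" using g[of z] g[of z'] csym ctrans by metis
  qed
  define \<tau> where "\<tau> p = g (\<sigma> p)" for p
  have gs: "g (\<sigma> z) = \<tau> (g z)" for z
    unfolding \<tau>_def using geq sc g by blast
  have \<tau>R: "\<tau> p \<in> R" for p unfolding \<tau>_def using g by blast
  have \<tau>inv: "\<tau> (\<tau> p) = p" if "p \<in> R" for p
    using gs[of "\<sigma> p"] inv gR that unfolding \<tau>_def by metis
  let ?rel = "{(z,z'). c z z' \<or> c z (\<sigma> z')}"
  let ?r' = "{(x,y). x\<in>R \<and> y\<in>R \<and> (y = x \<or> y = \<tau> x)}"
  have key: "(x,y) \<in> ?rel \<longleftrightarrow> (g x, g y) \<in> ?r'" for x y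
  proof -
    have "(x,y) \<in> ?rel \<longleftrightarrow> g x = g y \<or> g x = \<tau> (g y)"
      using geq gs by auto
    also have "\<dots> \<longleftrightarrow> g y = g x \<or> g y = \<tau> (g x)"
      using \<tau>inv g by metis
    finally show ?thesis using g by auto
  qed
  have imgR: "g ` UNIV = R"
  proof (intro equalityI subsetI)
    show "x \<in> R" if "x \<in> range g" for x using that g by auto
    show "x \<in> range g" if "x \<in> R" for x using that gR by (metis rangeI)
  qed
  have r'sub: "?r' \<subseteq> R \<times> R" by auto
  have rsub: "?rel \<subseteq> UNIV \<times> UNIV" by auto
  note tr = quot_transfer_card[OF imgR rsub r'sub key]
  have fr: "finite (R // ?r')" unfolding quotient_def using fin by auto
  then show "finite (UNIV // ?rel)" using tr by auto
  have "2 * card (R // ?r') = card R + card {x\<in>R. \<tau> x = x}"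
    by (rule invol_orbits[OF fin \<tau>R \<tau>inv])
  moreover have "{x\<in>R. \<tau> x = x} = {p\<in>R. c (\<sigma> p) p}"
    using geq gR unfolding \<tau>_def by auto
  ultimately show "2 * card (UNIV // ?rel) = card R + card {p\<in>R. c (\<sigma> p) p}"
    using tr by auto
qed

definition c2 :: "int \<Rightarrow> int \<Rightarrow> int \<Rightarrow> int \<Rightarrow> int \<times> int \<Rightarrow> int \<times> int \<Rightarrow> bool" where
  "c2 p q r w u v \<longleftrightarrow> (\<exists>n1 n2. fst u - fst v = p*n1 + q*n2 \<and> snd u - snd v = r*n1 + w*n2)"

lemma divmod_exists:
  fixes d v :: int assumes "d \<noteq> 0"
  shows "\<exists>k. 0 \<le> v - k*d \<and> v - k*d < \<bar>d\<bar>"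
proof (cases "d > 0")
  case True
  then show ?thesis
    by (intro exI[of _ "v div d"]) (metis abs_of_pos minus_div_mult_eq_mod pos_mod_bound pos_mod_sign)
next
  case False
  then have "-d > 0" using assms by auto
  then show ?thesis
    by (intro exI[of _ "- (v div (-d))"])
      (metis abs_of_neg False assms linorder_neqE_linordered_idom minus_div_mult_eq_mod
        mult_minus_left mult_minus_right pos_mod_bound pos_mod_sign)
qed

lemma small_mult_zero:
  fixes k d :: int assumes "\<bar>k*d\<bar> < \<bar>d\<bar>" shows "k = 0"
proof (rule ccontr)
  assume "k \<noteq> 0"
  then have "\<bar>k\<bar> \<ge> 1" by auto
  then have "\<bar>k\<bar> * \<bar>d\<bar> \<ge> \<bar>d\<bar>" by (simp add: mult_le_cancel_right1)
  then show False using assms by (simp add: abs_mult)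
qed

lemma T2:
  fixes p q r w :: int
  assumes D: "p*w - q*r \<noteq> 0"
  shows "\<exists>R. finite R \<and> card R = nat \<bar>p*w - q*r\<bar> \<and> (\<forall>v. \<exists>u\<in>R. c2 p q r w v u)
           \<and> (\<forall>u\<in>R. \<forall>v\<in>R. c2 p q r w u v \<longrightarrow> u = v)"
proof -
  define g0 where "g0 = gcd p q"
  have g0: "g0 \<noteq> 0" using D unfolding g0_def by auto
  obtain x y where xy: "x*p + y*q = g0" using bezout_int[of p q] unfolding g0_def by auto
  obtain p' where p': "p = p'*g0" unfolding g0_def by (metis gcd_dvd1 dvdE mult.commute)
  obtain q' where q': "q = q'*g0" unfolding g0_def by (metis gcd_dvd2 dvdE mult.commute)
  have one: "p'*x + q'*y = 1"
  proof -
    have "g0 * (p'*x + q'*y) = g0 * 1" using xy p' q' by (simp add: algebra_simps)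
    then show ?thesis using g0 by simp
  qed
  define h where "h = r*x + w*y"
  define e where "e = w*p' - r*q'"
  have ge: "g0 * e = p*w - q*r" unfolding e_def p' q' by (simp add: algebra_simps)
  have e0: "e \<noteq> 0" using ge D by auto
  have lat: "c2 p q r w v v2 \<longleftrightarrow> (\<exists>k l. fst v - fst v2 = k*g0 \<and> snd v - snd v2 = k*h + l*e)" for v v2
  proof
    assume "c2 p q r w v v2"
    then obtain n1 n2 where n: "fst v - fst v2 = p*n1 + q*n2" "snd v - snd v2 = r*n1 + w*n2"
      unfolding c2_def by auto
    define k where "k = p'*n1 + q'*n2"
    define l where "l = -y*n1 + x*n2"
    have "k*h + l*e = (r*n1 + w*n2)*(p'*x + q'*y)"
      unfolding k_def l_def h_def e_def by (simp add: algebra_simps)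
    then have "snd v - snd v2 = k*h + l*e" using one n by simp
    moreover have "fst v - fst v2 = k*g0" using n unfolding k_def p' q' by (simp add: algebra_simps)
    ultimately show "\<exists>k l. fst v - fst v2 = k*g0 \<and> snd v - snd v2 = k*h + l*e" by blast
  next
    assume "\<exists>k l. fst v - fst v2 = k*g0 \<and> snd v - snd v2 = k*h + l*e"
    then obtain k l where kl: "fst v - fst v2 = k*g0" "snd v - snd v2 = k*h + l*e" by auto
    define n1 where "n1 = k*x - l*q'"
    define n2 where "n2 = k*y + l*p'"
    have "p*n1 + q*n2 = k*(x*p + y*q)" unfolding n1_def n2_def p' q' by (simp add: algebra_simps)
    then have "fst v - fst v2 = p*n1 + q*n2" using kl xy by simp
    moreover have "snd v - snd v2 = r*n1 + w*n2"
      using kl unfolding n1_def n2_def h_def e_def by (simp add: algebra_simps)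
    ultimately show "c2 p q r w v v2" unfolding c2_def by blast
  qed
  define R where "R = {0..<\<bar>g0\<bar>} \<times> {0..<\<bar>e\<bar>}"
  have "finite R" unfolding R_def by auto
  moreover have "card R = nat \<bar>p*w - q*r\<bar>"
    unfolding R_def card_cartesian_product using ge by (simp add: nat_mult_distrib[symmetric] abs_mult[symmetric])
  moreover have "\<forall>v. \<exists>u\<in>R. c2 p q r w v u"
  proof
    fix v :: "int \<times> int"
    obtain k where k: "0 \<le> fst v - k*g0" "fst v - k*g0 < \<bar>g0\<bar>" using divmod_exists[OF g0] by blast
    obtain l where l: "0 \<le> snd v - k*h - l*e" "snd v - k*h - l*e < \<bar>e\<bar>" using divmod_exists[OF e0] by fastforce
    let ?u = "(fst v - k*g0, snd v - k*h - l*e)"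
    have "?u \<in> R" unfolding R_def using k l by auto
    moreover have "c2 p q r w v ?u" unfolding lat by auto
    ultimately show "\<exists>u\<in>R. c2 p q r w v u" by blast
  qed
  moreover have "\<forall>u\<in>R. \<forall>v\<in>R. c2 p q r w u v \<longrightarrow> u = v"
  proof (intro ballI impI)
    fix u v assume uv: "u \<in> R" "v \<in> R" "c2 p q r w u v"
    then obtain k l where kl: "fst u - fst v = k*g0" "snd u - snd v = k*h + l*e" unfolding lat by auto
    have "\<bar>k*g0\<bar> < \<bar>g0\<bar>" using uv(1,2) kl(1) unfolding R_def by auto
    then have k0: "k = 0" by (rule small_mult_zero)
    have "\<bar>l*e\<bar> < \<bar>e\<bar>" using uv(1,2) kl(2) k0 unfolding R_def by auto
    then have "l = 0" by (rule small_mult_zero)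
    then show "u = v" using kl k0 by (simp add: prod_eq_iff)
  qed
  ultimately show ?thesis by blast
qed

definition c3 :: "int \<Rightarrow> int \<Rightarrow> int \<Rightarrow> int \<Rightarrow> int\<times>int\<times>int \<Rightarrow> int\<times>int\<times>int \<Rightarrow> bool" where
  "c3 b c i j z z' \<longleftrightarrow> (\<exists>m1 m2 m3.
      fst z - fst z' = 2*m1 - b*m2 - c*m3 \<and>
      fst (snd z) - fst (snd z') = (2-2*b)*m2 - 2*c*m3 \<and>
      snd (snd z) - snd (snd z') = -i*m2 + (1-j)*m3)"

definition sg :: "int \<Rightarrow> int \<Rightarrow> int\<times>int\<times>int \<Rightarrow> int\<times>int\<times>int" where
  "sg t0 e0 z = (fst z - fst (snd z) - t0, - fst (snd z) - 2*t0, - snd (snd z) - e0)"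

lemma c2_refl: "c2 p q r w u u" unfolding c2_def by (intro exI[of _ 0]) auto
lemma c2_sym: "c2 p q r w u v \<Longrightarrow> c2 p q r w v u"
  unfolding c2_def by (metis minus_diff_eq mult_minus_right minus_add_distrib)
lemma c2_trans: "c2 p q r w u v \<Longrightarrow> c2 p q r w v x \<Longrightarrow> c2 p q r w u x"
  unfolding c2_def
proof (elim exE conjE)
  fix n1 n2 k1 k2
  assume H: "fst u - fst v = p * n1 + q * n2" "snd u - snd v = r * n1 + w * n2"
    "fst v - fst x = p * k1 + q * k2" "snd v - snd x = r * k1 + w * k2"
  show "\<exists>n1 n2. fst u - fst x = p * n1 + q * n2 \<and> snd u - snd x = r * n1 + w * n2"
    by (rule exI[of _ "n1+k1"], rule exI[of _ "n2+k2"]) (use H in \<open>simp add: algebra_simps\<close>)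
qed

lemma cramer2:
  fixes \<alpha> \<beta> \<gamma> \<delta> x y :: int
  assumes "\<alpha>*x + \<beta>*y = 0" "\<gamma>*x + \<delta>*y = 0"
  shows "(\<alpha>*\<delta> - \<beta>*\<gamma>) * y = 0"
proof -
  have "(\<alpha>*\<delta> - \<beta>*\<gamma>) * y = \<alpha>*(\<gamma>*x + \<delta>*y) - \<gamma>*(\<alpha>*x + \<beta>*y)" by (simp add: algebra_simps)
  then show ?thesis using assms by simp
qed

lemma GL:
  fixes b c i j t0 e0 :: int
  assumes jodd: "odd j" and D: "(2-2*b)*(1-j) - (-2*c)*(-i) \<noteq> 0"
  shows "finite (UNIV // {(z,z'). c3 b c i j z z' \<or> c3 b c i j z (sg t0 e0 z')})"
    and "card (UNIV // {(z,z'). c3 b c i j z z' \<or> c3 b c i j z (sg t0 e0 z')})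
          = nat \<bar>(2-2*b)*(1-j) - (-2*c)*(-i)\<bar> + (if even e0 then 2 else 0)"
proof -
  let ?c = "c3 b c i j" and ?s = "sg t0 e0"
  let ?c2 = "c2 (2-2*b) (-2*c) (-i) (1-j)"
  define \<Delta> where "\<Delta> = (2-2*b)*(1-j) - (-2*c)*(-i)"
  have "even (1-j)" using jodd by simp
  then obtain h where h: "1 - j = 2*h" by (elim evenE)
  have hj: "j = 1 - 2*h" using h by simp
  have crefl: "?c z z" for z unfolding c3_def by (intro exI[of _ 0]) auto
  have csym: "?c z' z" if "?c z z'" for z z'
  proof -
    from that obtain m1 m2 m3 where m: "fst z - fst z' = 2*m1 - b*m2 - c*m3"
      "fst (snd z) - fst (snd z') = (2-2*b)*m2 - 2*c*m3"
      "snd (snd z) - snd (snd z') = -i*m2 + (1-j)*m3" unfolding c3_def by blast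
    show ?thesis unfolding c3_def
      by (rule exI[of _ "-m1"], rule exI[of _ "-m2"], rule exI[of _ "-m3"]) (use m in \<open>simp add: algebra_simps\<close>)
  qed
  have ctrans: "?c x z" if "?c x y" "?c y z" for x y z
  proof -
    from that(1) obtain m1 m2 m3 where m: "fst x - fst y = 2*m1 - b*m2 - c*m3"
      "fst (snd x) - fst (snd y) = (2-2*b)*m2 - 2*c*m3"
      "snd (snd x) - snd (snd y) = -i*m2 + (1-j)*m3" unfolding c3_def by blast
    from that(2) obtain k1 k2 k3 where k: "fst y - fst z = 2*k1 - b*k2 - c*k3"
      "fst (snd y) - fst (snd z) = (2-2*b)*k2 - 2*c*k3"
      "snd (snd y) - snd (snd z) = -i*k2 + (1-j)*k3" unfolding c3_def by blast
    show ?thesis unfolding c3_def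
      by (rule exI[of _ "m1+k1"], rule exI[of _ "m2+k2"], rule exI[of _ "m3+k3"])
        (use m k in \<open>simp add: algebra_simps\<close>)
  qed
  have sc: "?c (?s z) (?s z')" if "?c z z'" for z z'
  proof -
    from that obtain m1 m2 m3 where m: "fst z - fst z' = 2*m1 - b*m2 - c*m3"
      "fst (snd z) - fst (snd z') = (2-2*b)*m2 - 2*c*m3"
      "snd (snd z) - snd (snd z') = -i*m2 + (1-j)*m3" unfolding c3_def by blast
    have e1: "fst (?s z) - fst (?s z') = (fst z - fst z') - (fst (snd z) - fst (snd z'))"
      "fst (snd (?s z)) - fst (snd (?s z')) = - (fst (snd z) - fst (snd z'))"
      "snd (snd (?s z)) - snd (snd (?s z')) = - (snd (snd z) - snd (snd z'))"
      unfolding sg_def by auto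
    show ?thesis unfolding c3_def e1 m
      by (rule exI[of _ "m1-m2"], rule exI[of _ "-m2"], rule exI[of _ "-m3"]) (simp add: algebra_simps)
  qed
  have inv: "?s (?s z) = z" for z unfolding sg_def by (simp add: prod_eq_iff)
  obtain R2 where R2: "finite R2" "card R2 = nat \<bar>\<Delta>\<bar>" "\<And>v. \<exists>u\<in>R2. ?c2 v u"
     "\<And>u v. u\<in>R2 \<Longrightarrow> v\<in>R2 \<Longrightarrow> ?c2 u v \<Longrightarrow> u = v"
    using T2[of "2-2*b" "1-j" "-2*c" "-i"] D unfolding \<Delta>_def by blast
  define RX where "RX = ({0,1} :: int set) \<times> R2"
  have finRX: "finite RX" unfolding RX_def using R2 by auto
  have cardRX: "card RX = 2 * nat \<bar>\<Delta>\<bar>" unfolding RX_def card_cartesian_product using R2 by simp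
  have ex: "\<exists>p\<in>RX. ?c z p" for z
  proof -
    obtain x y w where z: "z = (x,y,w)" by (cases z) auto
    obtain u where u: "u \<in> R2" "?c2 (y,w) u" using R2(3) by blast
    then obtain n1 n2 where n: "y - fst u = (2-2*b)*n1 + (-2*c)*n2" "w - snd u = (-i)*n1 + (1-j)*n2"
      unfolding c2_def by auto
    define x' where "x' = (x + b*n1 + c*n2) mod 2"
    define k where "k = (x + b*n1 + c*n2) div 2"
    have "x' \<in> {0,1}" unfolding x'_def by auto
    then have "(x', u) \<in> RX" unfolding RX_def using u by auto
    have X: "x + b*n1 + c*n2 = 2*k + x'" unfolding k_def x'_def by simp
    have x1: "x - x' = 2*k - b*n1 - c*n2" using X by linarith
    have "?c z (x', u)" unfolding c3_def z
      by (rule exI[of _ k], rule exI[of _ n1], rule exI[of _ n2]) (use n x1 in simp)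
    moreover note \<open>(x', u) \<in> RX\<close>
    ultimately show ?thesis by blast
  qed
  have uniq: "p = q" if "p \<in> RX" "q \<in> RX" "?c p q" for p q
  proof -
    obtain x u where p0: "p = (x,u)" by (cases p)
    have p: "p = (x,u)" "x = 0 \<or> x = 1" "u \<in> R2" using that(1) p0 unfolding RX_def by auto
    obtain x' u' where q0: "q = (x',u')" by (cases q)
    have q: "q = (x',u')" "x' = 0 \<or> x' = 1" "u' \<in> R2" using that(2) q0 unfolding RX_def by auto
    from that(3) obtain m1 m2 m3 where m: "x - x' = 2*m1 - b*m2 - c*m3"
      "fst u - fst u' = (2-2*b)*m2 - 2*c*m3"
      "snd u - snd u' = -i*m2 + (1-j)*m3" unfolding c3_def p q by fastforce
    have "?c2 u u'" unfolding c2_def by (rule exI[of _ m2], rule exI[of _ m3]) (use m in simp)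
    then have uu: "u = u'" using R2(4) p q by blast
    have e1: "(2-2*b)*m2 + (-2*c)*m3 = 0" "(-i)*m2 + (1-j)*m3 = 0" using m uu by auto
    have e2: "(-2*c)*m3 + (2-2*b)*m2 = 0" "(1-j)*m3 + (-i)*m2 = 0" using e1 by simp_all
    have "((2-2*b)*(1-j) - (-2*c)*(-i)) * m3 = 0" by (rule cramer2[OF e1])
    then have m30: "m3 = 0" using D by (metis mult_eq_0_iff)
    have "((-2*c)*(-i) - (2-2*b)*(1-j)) * m2 = 0" by (rule cramer2[OF e2])
    moreover have "(-2*c)*(-i) - (2-2*b)*(1-j) \<noteq> 0" using D by linarith
    ultimately have "m2 = 0" by (metis mult_eq_0_iff)
    then have "x - x' = 2*m1" using m m30 by simp
    then have "x = x'" using p(2) q(2) by presburger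
    then show ?thesis using p q uu by simp
  qed
  note TC = trans_count[where c = ?c and \<sigma> = ?s and R = RX, OF crefl csym ctrans sc inv finRX ex uniq]
  show "finite (UNIV // {(z,z'). ?c z z' \<or> ?c z (?s z')})" by (rule TC(1))
  define P where "P u = ?c (?s (0,u)) (0,u)" for u
  have Pind: "?c (?s (x,u)) (x,u) \<longleftrightarrow> P u" for x u
    unfolding P_def c3_def sg_def by simp
  have fixset: "{p\<in>RX. ?c (?s p) p} = ({0,1}::int set) \<times> {u\<in>R2. P u}"
    unfolding RX_def using Pind by auto
  have Pchar: "P (y,w) \<longleftrightarrow> (\<exists>m1 m2 m3. -y - t0 = 2*m1 - b*m2 - c*m3 \<and>
      -2*y - 2*t0 = (2-2*b)*m2 - 2*c*m3 \<and> -2*w - e0 = -i*m2 + (1-j)*m3)" for y w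
    unfolding P_def c3_def sg_def by (simp add: algebra_simps)
  have cardS: "card {u\<in>R2. P u} = (if even e0 then 2 else 0)"
  proof (cases "even e0")
    case False
    have "\<not> P u" for u
    proof
      assume "P u"
      then obtain m1 m2 m3 where m: "-fst u - t0 = 2*m1 - b*m2 - c*m3"
        "-2*fst u - 2*t0 = (2-2*b)*m2 - 2*c*m3" "-2* snd u - e0 = -i*m2 + (1-j)*m3"
        using Pchar[of "fst u" "snd u"] by auto
      have "(2-2*b)*m2 = 2*m2 - 2*(b*m2)" by (simp add: algebra_simps)
      then have "m2 = 2*m1" using m(1,2) by linarith
      then have "e0 = 2*(i*m1 - h*m3 - snd u)" using m(3) h by (simp add: algebra_simps)
      then show False using False by simp
    qed
    then show ?thesis using False by simp
  next
    case True
    then obtain e' where e': "e0 = 2*e'" by blast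
    define a1 where "a1 = (-t0, -e')"
    define a2 where "a2 = (c - t0, -h - e')"
    have Pc: "P u \<longleftrightarrow> ?c2 u a1 \<or> ?c2 u a2" for u
    proof
      assume "P u"
      then obtain m1 m2 m3 where m: "-fst u - t0 = 2*m1 - b*m2 - c*m3"
        "-2*fst u - 2*t0 = (2-2*b)*m2 - 2*c*m3" "-2* snd u - e0 = -i*m2 + (1-j)*m3"
        using Pchar[of "fst u" "snd u"] by auto
      have "(2-2*b)*m2 = 2*m2 - 2*(b*m2)" by (simp add: algebra_simps)
      then have m2: "m2 = 2*m1" using m(1,2) by linarith
      have A: "-fst u - t0 = (2-2*b)*m1 - c*m3" using m(1) m2 by (simp add: algebra_simps)
      have B: "-snd u - e' = -i*m1 + h*m3" using m(3) m2 e' h by (simp add: algebra_simps)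
      show "?c2 u a1 \<or> ?c2 u a2"
      proof (cases "even m3")
        case True
        then obtain n where n: "m3 = 2*n" by blast
        have "?c2 u a1" unfolding c2_def a1_def
          by (rule exI[of _ "-m1"], rule exI[of _ "-n"]) (use A B n in \<open>simp add: hj algebra_simps\<close>)
        then show ?thesis by blast
      next
        case False
        then obtain n where n: "m3 = 2*n+1" using oddE by blast
        have "?c2 u a2" unfolding c2_def a2_def
          by (rule exI[of _ "-m1"], rule exI[of _ "-n"]) (use A B n in \<open>simp add: hj algebra_simps\<close>)
        then show ?thesis by blast
      qed
    next
      assume "?c2 u a1 \<or> ?c2 u a2"
      then show "P u"
      proof
        assume "?c2 u a1"
        then obtain n1 n2 where n: "fst u - (-t0) = (2-2*b)*n1 + (-2*c)*n2" "snd u - (-e') = (-i)*n1 + (1-j)*n2"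
          unfolding c2_def a1_def by auto
        have fu: "fst u = (2-2*b)*n1 - 2*c*n2 - t0" "snd u = (-i)*n1 + (1-j)*n2 - e'" using n by simp_all
        have "P (fst u, snd u)" unfolding Pchar
          by (rule exI[of _ "-n1"], rule exI[of _ "-2*n1"], rule exI[of _ "-2*n2"])
            (simp add: fu e' hj algebra_simps)
        then show "P u" by simp
      next
        assume "?c2 u a2"
        then obtain n1 n2 where n: "fst u - (c - t0) = (2-2*b)*n1 + (-2*c)*n2" "snd u - (-h - e') = (-i)*n1 + (1-j)*n2"
          unfolding c2_def a2_def by auto
        have fu: "fst u = (2-2*b)*n1 - 2*c*n2 + c - t0" "snd u = (-i)*n1 + (1-j)*n2 - h - e'" using n by simp_all
        have "P (fst u, snd u)" unfolding Pchar
          by (rule exI[of _ "-n1"], rule exI[of _ "-2*n1"], rule exI[of _ "1-2*n2"])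
            (simp add: fu e' hj algebra_simps)
        then show "P u" by simp
      qed
    qed
    obtain u1 where u1: "u1 \<in> R2" "?c2 a1 u1" using R2(3) by blast
    obtain u2 where u2: "u2 \<in> R2" "?c2 a2 u2" using R2(3) by blast
    have cl1: "?c2 u a1 \<longleftrightarrow> u = u1" if "u \<in> R2" for u
      using u1 R2(4)[OF that u1(1)] c2_sym c2_trans by blast
    have cl2: "?c2 u a2 \<longleftrightarrow> u = u2" if "u \<in> R2" for u
      using u2 R2(4)[OF that u2(1)] c2_sym c2_trans by blast
    have "{u\<in>R2. P u} = {u1, u2}" using Pc cl1 cl2 u1 u2 by auto
    moreover have "u1 \<noteq> u2"
    proof
      assume "u1 = u2"
      then have "?c2 a1 a2" using u1 u2 c2_sym c2_trans by metis
      then obtain n1 n2 where n: "-c = (2-2*b)*n1 + (-2*c)*n2" "h = (-i)*n1 + (1-j)*n2"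
        unfolding c2_def a1_def a2_def by auto
      have "(2-2*b)*n1 + (-c)*(2*n2-1) = 0" "(-i)*n1 + h*(2*n2-1) = 0"
        using n h by (simp_all add: algebra_simps)
      from cramer2[OF this] have "((2-2*b)*h - (-c)*(-i)) * (2*n2-1) = 0" .
      moreover have "(2-2*b)*h - (-c)*(-i) \<noteq> 0"
      proof
        assume "(2-2*b)*h - (-c)*(-i) = 0"
        moreover have "\<Delta> = 2*((2-2*b)*h - (-c)*(-i))" unfolding \<Delta>_def hj by (simp add: algebra_simps)
        ultimately have "\<Delta> = 0" by simp
        then show False using D unfolding \<Delta>_def by simp
      qed
      ultimately have "2*n2 - 1 = 0" by simp
      then show False by presburger
    qed
    ultimately show ?thesis using True by simp
  qed
  have "card {p\<in>RX. ?c (?s p) p} = 2 * (if even e0 then 2 else 0)"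
    unfolding fixset card_cartesian_product cardS by simp
  then have "2 * card (UNIV // {(z,z'). ?c z z' \<or> ?c z (?s z')}) = 2 * nat \<bar>\<Delta>\<bar> + 2 * (if even e0 then 2 else 0)"
    using TC(2) cardRX by simp
  then show "card (UNIV // {(z,z'). ?c z z' \<or> ?c z (?s z')}) = nat \<bar>(2-2*b)*(1-j) - (-2*c)*(-i)\<bar> + (if even e0 then 2 else 0)"
    unfolding \<Delta>_def by simp
qed

definition Zv :: "(real^3) set" where "Zv = {z. \<forall>i. z$i \<in> \<int>}"

lemma A0_nth [simp]:
  "A0$1$1 = 1" "A0$1$2 = -1" "A0$1$3 = 0"
  "A0$2$1 = 0" "A0$2$2 = -1" "A0$2$3 = 0"
  "A0$3$1 = 0" "A0$3$2 = 0" "A0$3$3 = -1"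
  unfolding A0_def by simp_all

lemma mat1_nth [simp]:
  "(mat 1::real^3^3)$1$1 = 1" "(mat 1::real^3^3)$1$2 = 0" "(mat 1::real^3^3)$1$3 = 0"
  "(mat 1::real^3^3)$2$1 = 0" "(mat 1::real^3^3)$2$2 = 1" "(mat 1::real^3^3)$2$3 = 0"
  "(mat 1::real^3^3)$3$1 = 0" "(mat 1::real^3^3)$3$2 = 0" "(mat 1::real^3^3)$3$3 = 1"
  by (simp_all add: mat_def)

lemma mat3_eq_iff: "(M::real^3^3) = N \<longleftrightarrow>
  M$1$1 = N$1$1 \<and> M$1$2 = N$1$2 \<and> M$1$3 = N$1$3 \<and>
  M$2$1 = N$2$1 \<and> M$2$2 = N$2$2 \<and> M$2$3 = N$2$3 \<and>
  M$3$1 = N$3$1 \<and> M$3$2 = N$3$2 \<and> M$3$3 = N$3$3"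
  by (simp add: vec_eq_iff forall_3)

lemma vec3_eq_iff: "(x::real^3) = y \<longleftrightarrow> x$1 = y$1 \<and> x$2 = y$2 \<and> x$3 = y$3"
  by (simp add: vec_eq_iff forall_3)

lemma mmul3: "((M::real^3^3) ** N)$i$k = M$i$1 * N$1$k + M$i$2 * N$2$k + M$i$3 * N$3$k"
  by (simp add: matrix_matrix_mult_def sum_3)

lemma mvmul3: "((M::real^3^3) *v x)$i = M$i$1 * x$1 + M$i$2 * x$2 + M$i$3 * x$3"
  by (simp add: matrix_vector_mult_def sum_3)

lemma A0A0: "A0 ** A0 = mat 1"
  by (simp add: mat3_eq_iff mmul3)

lemma A0_ne: "A0 \<noteq> mat 1"
  by (simp add: mat3_eq_iff)

lemma matrix_inv_eq:
  fixes A B :: "real^3^3"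
  assumes "A ** B = mat 1" "B ** A = mat 1"
  shows "matrix_inv A = B"
proof -
  have ex: "\<exists>B'. A ** B' = mat 1 \<and> B' ** A = mat 1" using assms by blast
  define C where "C = matrix_inv A"
  have C: "A ** C = mat 1" "C ** A = mat 1"
    using someI_ex[OF ex] unfolding C_def matrix_inv_def by auto
  have "C = C ** (A ** B)" using assms by simp
  also have "\<dots> = (C ** A) ** B" by (simp add: matrix_mul_assoc)
  also have "\<dots> = B" using C by simp
  finally show ?thesis unfolding C_def .
qed

lemma inv_A0: "matrix_inv A0 = A0" by (rule matrix_inv_eq) (simp_all add: A0A0)
lemma inv_I: "matrix_inv (mat 1::real^3^3) = mat 1" by (rule matrix_inv_eq) simp_all

lemma A0v: "(A0 *v z)$1 = z$1 - z$2" "(A0 *v z)$2 = - z$2" "(A0 *v z)$3 = - z$3"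
  by (simp_all add: mvmul3)

lemma Zv_A0: "z \<in> Zv \<Longrightarrow> A0 *v z \<in> Zv"
  unfolding Zv_def by (simp add: forall_3 A0v)

lemma Zv_add: "z \<in> Zv \<Longrightarrow> w \<in> Zv \<Longrightarrow> z + w \<in> Zv"
  unfolding Zv_def by simp
lemma Zv_minus: "z \<in> Zv \<Longrightarrow> - z \<in> Zv"
  unfolding Zv_def by simp
lemma Zv_diff: "z \<in> Zv \<Longrightarrow> w \<in> Zv \<Longrightarrow> z - w \<in> Zv"
  unfolding Zv_def by simp
lemma Zv_0: "0 \<in> Zv" unfolding Zv_def by simp

definition GS :: "aff3 set" where "GS = {(z,B). z \<in> Zv \<and> (B = mat 1 \<or> B = A0)}"

lemma Gamma_sub: "x \<in> Gamma \<Longrightarrow> x \<in> GS"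
  unfolding Gamma_def
proof (induction rule: gen_subgroup.induct)
  case one then show ?case by (simp add: GS_def aff_one_def Zv_0)
next
  case (base x) then show ?case by (auto simp: GS_def Z3_def Zv_def Zv_0)
next
  case (mul x y)
  then show ?case
    by (auto simp: GS_def aff_mul_def A0A0 Zv_add Zv_A0)
next
  case (inv x)
  then show ?case
    by (auto simp: GS_def aff_inv_def inv_A0 inv_I Zv_minus Zv_A0)
qed

lemma Gamma_eq: "Gamma = GS"
proof
  show "Gamma \<subseteq> GS" using Gamma_sub by blast
  show "GS \<subseteq> Gamma"
  proof
    fix g assume "g \<in> GS"
    then obtain z B where g: "g = (z,B)" "z \<in> Zv" "B = mat 1 \<or> B = A0" unfolding GS_def by auto
    have zI: "(z, mat 1) \<in> Gamma" unfolding Gamma_def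
      by (rule gen_subgroup.base) (use g in \<open>auto simp: Z3_def Zv_def\<close>)
    show "g \<in> Gamma"
    proof (cases "B = mat 1")
      case True then show ?thesis using zI g by simp
    next
      case False
      have "(0, A0) \<in> Gamma" unfolding Gamma_def by (rule gen_subgroup.base) simp
      then have "aff_mul (z, mat 1) (0, A0) \<in> Gamma" using zI unfolding Gamma_def
        by (rule gen_subgroup.mul[rotated])
      then show ?thesis using g False by (simp add: aff_mul_def)
    qed
  qed
qed

lemma mv_neg: "(A::real^3^3) *v (- x) = - (A *v x)"
  by (simp add: vec3_eq_iff mvmul3)

lemma inv_props:
  fixes D :: "real^3^3" assumes "invertible D"
  shows "D ** matrix_inv D = mat 1" "matrix_inv D ** D = mat 1"
  using someI_ex[OF assms[unfolded invertible_def]] unfolding matrix_inv_def by auto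

lemma xi_formula:
  "xi (d,D) (m,B) = (d + D *v m - (D ** B ** matrix_inv D) *v d, D ** B ** matrix_inv D)"
  unfolding xi_def aff_mul_def aff_inv_def
  by (simp add: mv_neg matrix_vector_mul_assoc matrix_mul_assoc)

locale autG =
  fixes d :: "real^3" and D :: "real^3^3"
  assumes inv: "invertible D" and bij: "bij_betw (xi (d, D)) Gamma Gamma"
begin

definition "Di = matrix_inv D"

lemma DDi: "D ** Di = mat 1" "Di ** D = mat 1"
  using inv_props[OF inv] unfolding Di_def by auto

lemma xi_I: "xi (d,D) (m, mat 1) = (D *v m, mat 1)"
  unfolding xi_formula using DDi by (simp add: Di_def[symmetric])

lemma xi_in: "g \<in> GS \<Longrightarrow> xi (d,D) g \<in> GS"
  using bij Gamma_eq unfolding bij_betw_def by auto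

lemma xi_onto: "g \<in> GS \<Longrightarrow> \<exists>g'\<in>GS. xi (d,D) g' = g"
  using bij Gamma_eq unfolding bij_betw_def by (metis imageE)

lemma D_Zv: "z \<in> Zv \<Longrightarrow> D *v z \<in> Zv"
  using xi_in[of "(z, mat 1)"] xi_I unfolding GS_def by auto

lemma DA0: "D ** A0 ** Di = A0"
proof -
  have "xi (d,D) (0, A0) \<in> GS" using xi_in Zv_0 unfolding GS_def by auto
  then have h: "D ** A0 ** Di = mat 1 \<or> D ** A0 ** Di = A0"
    unfolding xi_formula GS_def Di_def by auto
  have "D ** A0 ** Di \<noteq> mat 1"
  proof
    assume "D ** A0 ** Di = mat 1"
    then have "Di ** (D ** A0 ** Di) ** D = Di ** D" by simp
    moreover have "Di ** (D ** A0 ** Di) ** D = (Di ** D) ** A0 ** (Di ** D)" by (simp add: matrix_mul_assoc)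
    ultimately have "A0 = mat 1" using DDi by simp
    then show False using A0_ne by simp
  qed
  then show ?thesis using h by auto
qed

lemma D_comm: "D ** A0 = A0 ** D"
proof -
  have "(D ** A0 ** Di) ** D = (D ** A0) ** (Di ** D)" by (simp add: matrix_mul_assoc)
  then have "D ** A0 = (D ** A0 ** Di) ** D" using DDi by simp
  then show ?thesis using DA0 by simp
qed

lemma t_Zv: "d - A0 *v d \<in> Zv"
proof -
  have "xi (d,D) (0, A0) \<in> GS" using xi_in Zv_0 unfolding GS_def by auto
  then show ?thesis using DA0 unfolding xi_formula GS_def Di_def by auto
qed

lemma xi_A0: "xi (d,D) (m, A0) = (D *v m + (d - A0 *v d), A0)"
  using DA0 unfolding xi_formula Di_def by simp

lemma Di_Zv: "w \<in> Zv \<Longrightarrow> Di *v w \<in> Zv"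
proof -
  assume w: "w \<in> Zv"
  then obtain g where g: "g \<in> GS" "xi (d,D) g = (w, mat 1)" using xi_onto[of "(w, mat 1)"] unfolding GS_def by auto
  then obtain z B where zB: "g = (z,B)" "z \<in> Zv" "B = mat 1 \<or> B = A0" unfolding GS_def by auto
  have "B = mat 1" using g zB xi_A0 A0_ne by auto
  then have "D *v z = w" using g zB xi_I by simp
  then have "Di *v w = z" using DDi by (metis matrix_vector_mul_assoc matrix_vector_mul_lid)
  then show ?thesis using zB by simp
qed

end

lemma det_Ints:
  fixes M :: "real^3^3" assumes "\<And>i k. M$i$k \<in> \<int>"
  shows "det M \<in> \<int>"
  unfolding det_3 using assms by (intro Ints_diff Ints_add Ints_mult) auto

lemma col_Zv:
  fixes M :: "real^3^3" assumes "\<And>z. z \<in> Zv \<Longrightarrow> M *v z \<in> Zv"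
  shows "M$i$k \<in> \<int>"
proof -
  have e: "vector [1,0,0] \<in> Zv" "vector [0,1,0] \<in> Zv" "vector [0,0,1] \<in> Zv"
    unfolding Zv_def by (simp_all add: forall_3)
  have "(M *v vector [1,0,0])$i \<in> \<int>" "(M *v vector [0,1,0])$i \<in> \<int>" "(M *v vector [0,0,1])$i \<in> \<int>"
    using assms[OF e(1)] assms[OF e(2)] assms[OF e(3)] unfolding Zv_def by auto
  then have "M$i$1 \<in> \<int>" "M$i$2 \<in> \<int>" "M$i$3 \<in> \<int>" by (simp_all add: mvmul3)
  then show ?thesis using exhaust_3[of k] by auto
qed

lemma int_unit: "(x::real) \<in> \<int> \<Longrightarrow> y \<in> \<int> \<Longrightarrow> x * y = 1 \<Longrightarrow> x = 1 \<or> x = -1"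
proof -
  assume "x \<in> \<int>" "y \<in> \<int>" "x * y = 1"
  then obtain p q where "x = of_int p" "y = of_int q" by (auto elim!: Ints_cases)
  with \<open>x * y = 1\<close> have "p * q = 1" by (metis of_int_eq_1_iff of_int_mult)
  then have "p = 1 \<or> p = -1" by (auto simp: zmult_eq_1_iff)
  then show ?thesis using \<open>x = of_int p\<close> by auto
qed

context autG begin

lemma D_int: "D$i$k \<in> \<int>" by (rule col_Zv) (rule D_Zv)
lemma Di_int: "Di$i$k \<in> \<int>" by (rule col_Zv) (rule Di_Zv)

lemma detD: "det D = 1 \<or> det D = -1"
proof -
  have "det D * det Di = 1" using DDi det_mul[of D Di] by simp
  then show ?thesis using int_unit det_Ints D_int Di_int by blast
qed

lemma D_shape: "\<exists>a b c i j. a \<in> {1,-1} \<and> odd j \<and>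
   D$1$1 = of_int a \<and> D$1$2 = of_int b \<and> D$1$3 = of_int c \<and>
   D$2$1 = 0 \<and> D$2$2 = of_int (a + 2*b) \<and> D$2$3 = of_int (2*c) \<and>
   D$3$1 = 0 \<and> D$3$2 = of_int i \<and> D$3$3 = of_int j"
proof -
  have c: "(D ** A0)$1$1 = (A0 ** D)$1$1" "(D ** A0)$3$1 = (A0 ** D)$3$1"
     "(D ** A0)$1$2 = (A0 ** D)$1$2" "(D ** A0)$1$3 = (A0 ** D)$1$3" using D_comm by simp_all
  then have e: "D$2$1 = 0" "D$3$1 = 0" "D$2$2 = D$1$1 + 2 * D$1$2" "D$2$3 = 2 * D$1$3"
    by (simp_all add: mmul3)
  obtain a where a: "D$1$1 = of_int a" using D_int[of 1 1] by (auto elim: Ints_cases)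
  obtain b where b: "D$1$2 = of_int b" using D_int[of 1 2] by (auto elim: Ints_cases)
  obtain c where c: "D$1$3 = of_int c" using D_int[of 1 3] by (auto elim: Ints_cases)
  obtain i where i: "D$3$2 = of_int i" using D_int[of 3 2] by (auto elim: Ints_cases)
  obtain j where j: "D$3$3 = of_int j" using D_int[of 3 3] by (auto elim: Ints_cases)
  have "det D = of_int (a * ((a + 2*b)*j - 2*c*i))"
    unfolding det_3 using e a b c i j by (simp add: algebra_simps)
  then have "a * ((a + 2*b)*j - 2*c*i) = 1 \<or> a * ((a + 2*b)*j - 2*c*i) = -1"
    using detD by (metis of_int_eq_1_iff of_int_eq_iff of_int_minus of_int_1)
  then have u: "(a = 1 \<or> a = -1) \<and> ((a + 2*b)*j - 2*c*i = 1 \<or> (a + 2*b)*j - 2*c*i = -1)"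
    using zmult_eq_1_iff[of a] zmult_eq_1_iff[of "-a"] by (auto simp: minus_equation_iff[of "_ * _"])
  then have X: "(a + 2*b)*j - 2*c*i = 1 \<or> (a + 2*b)*j - 2*c*i = -1" by blast
  have "odd ((a + 2*b)*j - 2*c*i)" using X by (metis even_minus odd_one)
  then have "odd j"
  proof (rule contrapos_nn)
    assume "even j"
    then show "even ((a + 2*b)*j - 2*c*i)" by simp
  qed
  note oj = this
  show ?thesis
    by (rule exI[of _ a], rule exI[of _ b], rule exI[of _ c], rule exI[of _ i], rule exI[of _ j])
      (use u e a b c i j oj in simp)
qed

end

definition crel :: "real^3^3 \<Rightarrow> real^3 \<Rightarrow> ((real^3) \<times> (real^3)) set" where
  "crel E u = {(z,z'). z \<in> Zv \<and> z' \<in> Zv \<and> (\<exists>m\<in>Zv. z = z' + E *v m \<or> z = E *v m + A0 *v z' - u)}"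

lemma A0A0v [simp]: "A0 *v (A0 *v x) = x"
  by (simp add: matrix_vector_mul_assoc A0A0)

context autG begin

definition "tt = d - A0 *v d"

abbreviation "rr \<equiv> reid_rel Gamma (xi (d,D))"

lemma A0tt: "A0 *v tt = - tt"
  unfolding tt_def by (simp add: matrix_vector_mult_diff_distrib matrix_vector_mul_assoc A0A0)

lemma rr_formula:
  assumes "C = mat 1 \<or> C = A0" "B' = mat 1 \<or> B' = A0"
  shows "aff_mul (aff_mul (m,C) (z',B')) (aff_inv (xi (d,D) (m,C))) =
     (m + C *v z' - B' *v (D *v m + (if C = A0 then tt else 0)), B')"
  using assms A0_ne
  by (auto simp: xi_I xi_A0 tt_def[symmetric] aff_mul_def aff_inv_def inv_A0 inv_I A0A0
      mv_neg matrix_vector_mul_assoc[symmetric] matrix_mul_assoc[symmetric])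

lemma rr_char:
  assumes "(z,B) \<in> GS" "(z',B') \<in> GS"
  shows "((z,B), (z',B')) \<in> rr \<longleftrightarrow> B = B' \<and>
   (\<exists>m C. m \<in> Zv \<and> (C = mat 1 \<or> C = A0) \<and>
     z = m + C *v z' - B' *v (D *v m + (if C = A0 then tt else 0)))"
proof -
  have B': "B' = mat 1 \<or> B' = A0" using assms unfolding GS_def by auto
  have "((z,B), (z',B')) \<in> rr \<longleftrightarrow> (\<exists>h\<in>GS. (z,B) = aff_mul (aff_mul h (z',B')) (aff_inv (xi (d,D) h)))"
    unfolding reid_rel_def Gamma_eq using assms by auto
  also have "\<dots> \<longleftrightarrow> (\<exists>m C. m \<in> Zv \<and> (C = mat 1 \<or> C = A0) \<and>
       (z,B) = (m + C *v z' - B' *v (D *v m + (if C = A0 then tt else 0)), B'))"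
  proof
    assume "\<exists>h\<in>GS. (z,B) = aff_mul (aff_mul h (z',B')) (aff_inv (xi (d,D) h))"
    then obtain m C where "(m,C) \<in> GS" "(z,B) = aff_mul (aff_mul (m,C) (z',B')) (aff_inv (xi (d,D) (m,C)))" by auto
    moreover then have "m \<in> Zv" "C = mat 1 \<or> C = A0" unfolding GS_def by auto
    ultimately show "\<exists>m C. m \<in> Zv \<and> (C = mat 1 \<or> C = A0) \<and>
       (z,B) = (m + C *v z' - B' *v (D *v m + (if C = A0 then tt else 0)), B')"
      using rr_formula[OF _ B'] by metis
  next
    assume "\<exists>m C. m \<in> Zv \<and> (C = mat 1 \<or> C = A0) \<and>
       (z,B) = (m + C *v z' - B' *v (D *v m + (if C = A0 then tt else 0)), B')"
    then obtain m C where mC: "m \<in> Zv" "C = mat 1 \<or> C = A0"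
       "(z,B) = (m + C *v z' - B' *v (D *v m + (if C = A0 then tt else 0)), B')" by blast
    then have "(m,C) \<in> GS" unfolding GS_def by auto
    then show "\<exists>h\<in>GS. (z,B) = aff_mul (aff_mul h (z',B')) (aff_inv (xi (d,D) h))"
      using rr_formula[OF mC(2) B'] mC(3) by metis
  qed
  finally show ?thesis by auto
qed

end

context autG begin

lemma rr_I:
  assumes "z \<in> Zv" "z' \<in> Zv"
  shows "((z, mat 1),(z', mat 1)) \<in> rr \<longleftrightarrow> (z,z') \<in> crel (mat 1 - D) tt"
proof -
  have g: "(z, mat 1) \<in> GS" "(z', mat 1) \<in> GS" using assms unfolding GS_def by auto
  show ?thesis
  proof
    assume "((z, mat 1),(z', mat 1)) \<in> rr"
    then obtain m C where mC: "m \<in> Zv" "C = mat 1 \<or> C = A0"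
      "z = m + C *v z' - mat 1 *v (D *v m + (if C = A0 then tt else 0))"
      using rr_char[OF g] by blast
    have "z = z' + (mat 1 - D) *v m \<or> z = (mat 1 - D) *v m + A0 *v z' - tt"
      using mC(2,3) A0_ne by (auto simp: matrix_vector_mult_diff_rdistrib algebra_simps)
    then show "(z,z') \<in> crel (mat 1 - D) tt" unfolding crel_def using assms mC(1) by blast
  next
    assume "(z,z') \<in> crel (mat 1 - D) tt"
    then obtain m where m: "m \<in> Zv" "z = z' + (mat 1 - D) *v m \<or> z = (mat 1 - D) *v m + A0 *v z' - tt"
      unfolding crel_def by blast
    from m(2) have "\<exists>C. (C = mat 1 \<or> C = A0) \<and> z = m + C *v z' - mat 1 *v (D *v m + (if C = A0 then tt else 0))"
    proof
      assume "z = z' + (mat 1 - D) *v m"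
      then have "z = m + mat 1 *v z' - mat 1 *v (D *v m + (if mat 1 = A0 then tt else 0))"
        using A0_ne by (simp add: matrix_vector_mult_diff_rdistrib algebra_simps)
      then show ?thesis by blast
    next
      assume "z = (mat 1 - D) *v m + A0 *v z' - tt"
      then have "z = m + A0 *v z' - mat 1 *v (D *v m + (if A0 = A0 then tt else 0))"
        by (simp add: matrix_vector_mult_diff_rdistrib algebra_simps)
      then show ?thesis by blast
    qed
    then show "((z, mat 1),(z', mat 1)) \<in> rr" unfolding rr_char[OF g] using m(1) by blast
  qed
qed

lemma rr_A:
  assumes "z \<in> Zv" "z' \<in> Zv"
  shows "((z, A0),(z', A0)) \<in> rr \<longleftrightarrow> (z,z') \<in> crel (mat 1 - A0 ** D) (- tt)"
proof -
  have g: "(z, A0) \<in> GS" "(z', A0) \<in> GS" using assms unfolding GS_def by auto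
  have E: "(mat 1 - A0 ** D) *v m = m - A0 *v (D *v m)" for m
    by (simp add: matrix_vector_mult_diff_rdistrib matrix_vector_mul_assoc)
  show ?thesis
  proof
    assume "((z, A0),(z', A0)) \<in> rr"
    then obtain m C where mC: "m \<in> Zv" "C = mat 1 \<or> C = A0"
      "z = m + C *v z' - A0 *v (D *v m + (if C = A0 then tt else 0))"
      using rr_char[OF g] by blast
    have "z = z' + (mat 1 - A0 ** D) *v m \<or> z = (mat 1 - A0 ** D) *v m + A0 *v z' - - tt"
      using mC(2,3) A0_ne A0tt unfolding E by (auto simp: matrix_vector_right_distrib algebra_simps)
    then show "(z,z') \<in> crel (mat 1 - A0 ** D) (- tt)" unfolding crel_def using assms mC(1) by blast
  next
    assume "(z,z') \<in> crel (mat 1 - A0 ** D) (- tt)"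
    then obtain m where m: "m \<in> Zv" "z = z' + (mat 1 - A0 ** D) *v m \<or> z = (mat 1 - A0 ** D) *v m + A0 *v z' - - tt"
      unfolding crel_def by blast
    from m(2) have "\<exists>C. (C = mat 1 \<or> C = A0) \<and> z = m + C *v z' - A0 *v (D *v m + (if C = A0 then tt else 0))"
    proof
      assume "z = z' + (mat 1 - A0 ** D) *v m"
      then have "z = m + mat 1 *v z' - A0 *v (D *v m + (if mat 1 = A0 then tt else 0))"
        using A0_ne unfolding E by (simp add: algebra_simps)
      then show ?thesis by blast
    next
      assume "z = (mat 1 - A0 ** D) *v m + A0 *v z' - - tt"
      then have "z = m + A0 *v z' - A0 *v (D *v m + (if A0 = A0 then tt else 0))"
        using A0tt unfolding E by (simp add: matrix_vector_right_distrib algebra_simps)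
      then show ?thesis by blast
    qed
    then show "((z, A0),(z', A0)) \<in> rr" unfolding rr_char[OF g] using m(1) by blast
  qed
qed

lemma rr_sub: "rr \<subseteq> GS \<times> GS" unfolding reid_rel_def Gamma_eq by auto

lemma rr_cross: "(g,g') \<in> rr \<Longrightarrow> snd g = snd g'"
proof -
  assume r: "(g,g') \<in> rr"
  obtain z B z' B' where gg: "g = (z,B)" "g' = (z',B')" by (cases g, cases g')
  have "g \<in> GS" "g' \<in> GS" using r rr_sub by auto
  then show ?thesis using rr_char r gg by auto
qed

lemma rr_refl: "g \<in> GS \<Longrightarrow> (g,g) \<in> rr"
proof -
  assume g: "g \<in> GS"
  then obtain z B where zB: "g = (z,B)" "z \<in> Zv" unfolding GS_def by auto
  show ?thesis unfolding zB(1) rr_char[OF g[unfolded zB(1)] g[unfolded zB(1)]]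
    by (rule conjI[OF refl], rule exI[of _ 0], rule exI[of _ "mat 1"]) (simp add: Zv_0 not_sym[OF A0_ne])
qed

lemma count_split:
  shows "finite (Gamma // rr) \<longleftrightarrow> finite (Zv // crel (mat 1 - D) tt) \<and> finite (Zv // crel (mat 1 - A0 ** D) (- tt))"
    and "finite (Gamma // rr) \<Longrightarrow> card (Gamma // rr) = card (Zv // crel (mat 1 - D) tt) + card (Zv // crel (mat 1 - A0 ** D) (- tt))"
proof -
  define S1 where "S1 = (\<lambda>z. (z, mat 1::real^3^3)) ` Zv"
  define S2 where "S2 = (\<lambda>z. (z, A0)) ` Zv"
  have GSU: "Gamma = S1 \<union> S2" unfolding Gamma_eq GS_def S1_def S2_def by auto
  have disj: "S1 \<inter> S2 = {}" unfolding S1_def S2_def using A0_ne by auto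
  have sub: "rr \<subseteq> S1\<times>S1 \<union> S2\<times>S2"
  proof
    fix p assume p: "p \<in> rr"
    then obtain g g' where gg: "p = (g,g')" "g \<in> GS" "g' \<in> GS" using rr_sub by auto
    then have "snd g = snd g'" using rr_cross p by auto
    then show "p \<in> S1\<times>S1 \<union> S2\<times>S2" using gg unfolding GS_def S1_def S2_def by (cases g, cases g') auto
  qed
  have rfl: "(x,x) \<in> rr" if "x \<in> S1 \<union> S2" for x using rr_refl that GSU Gamma_eq by auto
  note U = quot_union[OF disj sub rfl]
  have im1: "(\<lambda>z. (z, mat 1)) ` Zv = S1" by (simp add: S1_def)
  have im2: "(\<lambda>z. (z, A0)) ` Zv = S2" by (simp add: S2_def)
  have cs: "crel E u \<subseteq> Zv \<times> Zv" for E u by (auto simp: crel_def)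
  have rs1: "rr \<inter> S1\<times>S1 \<subseteq> S1 \<times> S1" and rs2: "rr \<inter> S2\<times>S2 \<subseteq> S2 \<times> S2" by auto
  have i1: "(x,y) \<in> crel (mat 1 - D) tt \<longleftrightarrow> ((x, mat 1),(y, mat 1)) \<in> rr \<inter> S1\<times>S1"
    if "x \<in> Zv" "y \<in> Zv" for x y using rr_I[OF that] that unfolding S1_def by auto
  have i2: "(x,y) \<in> crel (mat 1 - A0 ** D) (- tt) \<longleftrightarrow> ((x, A0),(y, A0)) \<in> rr \<inter> S2\<times>S2"
    if "x \<in> Zv" "y \<in> Zv" for x y using rr_A[OF that] that unfolding S2_def by auto
  note T1 = quot_transfer_card[OF im1 cs rs1 i1]
  note T2 = quot_transfer_card[OF im2 cs rs2 i2]
  from U(1) have Q: "Gamma // rr = S1//(rr \<inter> S1\<times>S1) \<union> S2//(rr \<inter> S2\<times>S2)"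
    by (simp only: GSU[symmetric])
  show "finite (Gamma // rr) \<longleftrightarrow> finite (Zv // crel (mat 1 - D) tt) \<and> finite (Zv // crel (mat 1 - A0 ** D) (- tt))"
    unfolding Q using T1 T2 by simp
  show "finite (Gamma // rr) \<Longrightarrow> card (Gamma // rr) = card (Zv // crel (mat 1 - D) tt) + card (Zv // crel (mat 1 - A0 ** D) (- tt))"
    unfolding Q using T1 T2 card_Un_disjoint[OF _ _ U(2)] by simp
qed

end

lemma crel_refl: "z \<in> Zv \<Longrightarrow> (z,z) \<in> crel E u"
  unfolding crel_def using Zv_0 by force

lemma left_kernel:
  fixes E :: "real^3^3" assumes "det E = 0"
  shows "\<exists>\<mu>. \<mu> \<noteq> 0 \<and> \<mu> v* E = 0"
proof -
  have "\<not> invertible (transpose E)" using assms invertible_det_nz[of "transpose E"] by simp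
  then have "\<not> (\<exists>B. B ** transpose E = mat 1)" using invertible_left_inverse by blast
  then obtain x where "transpose E *v x = 0" "x \<noteq> 0" using matrix_left_invertible_ker by blast
  then show ?thesis by auto
qed

lemma crel_infinite:
  fixes E :: "real^3^3" and u :: "real^3"
  assumes dE: "det E = 0" and cE: "E ** A0 = A0 ** E" and Au: "A0 *v u = - u"
  shows "infinite (Zv // crel E u)"
proof
  assume fin: "finite (Zv // crel E u)"
  obtain \<mu> where \<mu>: "\<mu> \<noteq> 0" "\<mu> v* E = 0" using left_kernel[OF dE] by blast
  define \<nu> where "\<nu> = \<mu> v* A0"
  have "\<nu> v* E = \<mu> v* (A0 ** E)" unfolding \<nu>_def by (simp add: vector_matrix_mul_assoc)
  also have "\<dots> = (\<mu> v* E) v* A0" using cE by (simp add: vector_matrix_mul_assoc)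
  finally have \<nu>E: "\<nu> v* E = 0" using \<mu> by simp
  have \<nu>A: "\<nu> v* A0 = \<mu>" unfolding \<nu>_def by (simp add: vector_matrix_mul_assoc A0A0)
  obtain lm :: "real^3" and \<epsilon> :: real where lam: "lm \<noteq> 0" "lm v* E = 0" "lm v* A0 = \<epsilon> *\<^sub>R lm" "\<epsilon> = 1 \<or> \<epsilon> = -1"
  proof (cases "\<mu> + \<nu> = 0")
    case True
    then have "\<nu> = - \<mu>" by (simp add: eq_neg_iff_add_eq_0 add.commute)
    then have "\<mu> - \<nu> = 2 *\<^sub>R \<mu>" by (simp add: scaleR_2)
    then have "\<mu> - \<nu> \<noteq> 0" using \<mu>(1) by simp
    moreover have "(\<mu> - \<nu>) v* E = 0" using \<mu> \<nu>E by (simp add: vector_matrix_mult_diff_distrib)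
    moreover have "(\<mu> - \<nu>) v* A0 = (-1) *\<^sub>R (\<mu> - \<nu>)"
      using \<nu>A by (simp add: vector_matrix_mult_diff_distrib \<nu>_def)
    ultimately show ?thesis using that by blast
  next
    case False
    moreover have "(\<mu> + \<nu>) v* E = 0" using \<mu> \<nu>E by (simp add: vector_matrix_left_distrib)
    moreover have "(\<mu> + \<nu>) v* A0 = 1 *\<^sub>R (\<mu> + \<nu>)"
      using \<nu>A by (simp add: vector_matrix_left_distrib \<nu>_def)
    ultimately show ?thesis using that by blast
  qed
  have lE: "inner lm (E *v m) = 0" for m using lam(2) dot_lmul_matrix[of lm E m] by simp
  have lA: "inner lm (A0 *v z) = \<epsilon> * inner lm z" for z using lam(3) dot_lmul_matrix[of lm A0 z] by simp
  have lu: "\<epsilon> = 1 \<Longrightarrow> inner lm u = 0" using lA[of u] Au by (simp add: inner_minus_right)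
  define \<psi> where "\<psi> z = \<bar>2 * inner lm z + inner lm u\<bar>" for z
  have inv: "\<psi> z = \<psi> z'" if "(z,z') \<in> crel E u" for z z'
  proof -
    from that obtain m where "z = z' + E *v m \<or> z = E *v m + A0 *v z' - u" unfolding crel_def by blast
    then show ?thesis
    proof
      assume "z = z' + E *v m" then show ?thesis unfolding \<psi>_def by (simp add: inner_add_right lE)
    next
      assume z: "z = E *v m + A0 *v z' - u"
      then have "inner lm z = \<epsilon> * inner lm z' - inner lm u" by (simp add: inner_add_right inner_diff_right lE lA)
      then show ?thesis unfolding \<psi>_def using lam(4) lu by auto
    qed
  qed
  have "\<psi> ` Zv \<subseteq> (\<lambda>C. \<psi> (SOME z. z \<in> C)) ` (Zv // crel E u)"
  proof
    fix y assume "y \<in> \<psi> ` Zv"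
    then obtain z where z: "z \<in> Zv" "y = \<psi> z" by auto
    let ?C = "crel E u `` {z}"
    have "z \<in> ?C" using crel_refl z by auto
    then have "(SOME w. w \<in> ?C) \<in> ?C" by (rule someI)
    then have "\<psi> (SOME w. w \<in> ?C) = \<psi> z" using inv by auto
    moreover have "?C \<in> Zv // crel E u" using z(1) by (rule quotientI)
    ultimately show "y \<in> (\<lambda>C. \<psi> (SOME z. z \<in> C)) ` (Zv // crel E u)" using z by force
  qed
  then have finpsi: "finite (\<psi> ` Zv)" using fin finite_subset by blast
  obtain k where k: "lm$k \<noteq> 0" using lam(1) by (metis vec_eq_iff zero_index)
  define M where "M = Max (\<psi> ` Zv)"
  obtain n :: nat where n: "(M + \<bar>inner lm u\<bar>) / (2 * \<bar>lm$k\<bar>) < of_nat n" using reals_Archimedean2 by blast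
  have zn: "axis k (of_nat n) \<in> Zv" unfolding Zv_def by (auto simp: axis_def)
  have "\<psi> (axis k (of_nat n)) \<le> M" unfolding M_def using finpsi zn by (auto intro: Max_ge)
  moreover have "\<psi> (axis k (of_nat n)) = \<bar>2 * (lm$k * of_nat n) + inner lm u\<bar>"
    unfolding \<psi>_def by (simp add: inner_axis)
  moreover have "M + \<bar>inner lm u\<bar> < 2 * \<bar>lm$k\<bar> * of_nat n"
    using n k by (simp add: field_simps)
  moreover have "\<bar>2 * (lm$k * of_nat n)\<bar> = 2 * \<bar>lm$k\<bar> * of_nat n" by (simp add: abs_mult)
  ultimately show False by linarith
qed

definition fv :: "int\<times>int\<times>int \<Rightarrow> real^3" where
  "fv z = vector [of_int (fst z), of_int (fst (snd z)), of_int (snd (snd z))]"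

lemma fv_nth [simp]: "fv z $ 1 = of_int (fst z)" "fv z $ 2 = of_int (fst (snd z))" "fv z $ 3 = of_int (snd (snd z))"
  unfolding fv_def by simp_all

definition shp :: "real^3^3 \<Rightarrow> int \<Rightarrow> int \<Rightarrow> int \<Rightarrow> int \<Rightarrow> bool" where
  "shp D b c i j \<longleftrightarrow> D$1$1 = -1 \<and> D$1$2 = of_int b \<and> D$1$3 = of_int c \<and>
     D$2$1 = 0 \<and> D$2$2 = of_int (2*b - 1) \<and> D$2$3 = of_int (2*c) \<and>
     D$3$1 = 0 \<and> D$3$2 = of_int i \<and> D$3$3 = of_int j"

lemma fv_img: "range fv = Zv"
proof
  show "range fv \<subseteq> Zv" unfolding Zv_def by (auto simp: forall_3)
  show "Zv \<subseteq> range fv"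
  proof
    fix z assume "z \<in> Zv"
    then have "z$1 \<in> \<int>" "z$2 \<in> \<int>" "z$3 \<in> \<int>" unfolding Zv_def by auto
    then obtain x y w where "z$1 = of_int x" "z$2 = of_int y" "z$3 = of_int w" by (metis Ints_cases)
    then have "z = fv (x,y,w)" by (simp add: vec3_eq_iff)
    then show "z \<in> range fv" by blast
  qed
qed

lemma Emul:
  assumes "shp D b c i j"
  shows "(mat 1 - D) *v fv m = fv (2*fst m - b*fst (snd m) - c* snd (snd m),
      (2-2*b)*fst (snd m) - 2*c* snd (snd m), -i*fst (snd m) + (1-j)* snd (snd m))"
proof -
  have e: "D$1$1 = -1" "D$1$2 = of_int b" "D$1$3 = of_int c" "D$2$1 = 0" "D$2$2 = of_int (2*b - 1)"
    "D$2$3 = of_int (2*c)" "D$3$1 = 0" "D$3$2 = of_int i" "D$3$3 = of_int j"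
    using assms unfolding shp_def by auto
  show ?thesis by (simp add: e vec3_eq_iff mvmul3 algebra_simps)
qed

lemma fv_add_eq: "fv z = fv z' + fv w \<longleftrightarrow> fst z - fst z' = fst w \<and> fst (snd z) - fst (snd z') = fst (snd w)
   \<and> snd (snd z) - snd (snd z') = snd (snd w)"
proof -
  have "fv z = fv z' + fv w \<longleftrightarrow> real_of_int (fst z) = of_int (fst z') + of_int (fst w) \<and>
    real_of_int (fst (snd z)) = of_int (fst (snd z')) + of_int (fst (snd w)) \<and>
    real_of_int (snd (snd z)) = of_int (snd (snd z')) + of_int (snd (snd w))"
    by (simp add: vec3_eq_iff)
  also have "\<dots> \<longleftrightarrow> fst z - fst z' = fst w \<and> fst (snd z) - fst (snd z') = fst (snd w)
   \<and> snd (snd z) - snd (snd z') = snd (snd w)"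
    by (simp only: of_int_add[symmetric] of_int_eq_iff, arith)
  finally show ?thesis .
qed

lemma c3_iff:
  assumes "shp D b c i j"
  shows "(\<exists>m\<in>Zv. fv z = fv z' + (mat 1 - D) *v m) \<longleftrightarrow> c3 b c i j z z'"
proof -
  have "(\<exists>m\<in>Zv. fv z = fv z' + (mat 1 - D) *v m) \<longleftrightarrow> (\<exists>m. fv z = fv z' + (mat 1 - D) *v fv m)"
    unfolding fv_img[symmetric] by blast
  also have "\<dots> \<longleftrightarrow> c3 b c i j z z'"
    unfolding Emul[OF assms] fv_add_eq c3_def by auto
  finally show ?thesis .
qed

lemma A0fv: "A0 *v fv z - vector [of_int t0, of_int (2*t0), of_int e0] = fv (sg t0 e0 z)"
  unfolding sg_def by (simp add: vec3_eq_iff A0v)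

lemma crel_int:
  assumes shp: "shp D b c i j" and jodd: "odd j" and Dl: "(2-2*b)*(1-j) - (-2*c)*(-i) \<noteq> 0"
  shows "finite (Zv // crel (mat 1 - D) (vector [of_int t0, of_int (2*t0), of_int e0]))"
    and "card (Zv // crel (mat 1 - D) (vector [of_int t0, of_int (2*t0), of_int e0]))
      = nat \<bar>(2-2*b)*(1-j) - (-2*c)*(-i)\<bar> + (if even e0 then 2 else 0)"
proof -
  let ?u = "vector [of_int t0, of_int (2*t0), of_int e0] :: real^3"
  let ?ir = "{(z,z'). c3 b c i j z z' \<or> c3 b c i j z (sg t0 e0 z')}"
  have iff: "(z,z') \<in> ?ir \<longleftrightarrow> (fv z, fv z') \<in> crel (mat 1 - D) ?u" for z z'
  proof -
    have r: "(mat 1 - D) *v m + A0 *v fv z' - ?u = fv (sg t0 e0 z') + (mat 1 - D) *v m" for m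
    proof -
      have "(mat 1 - D) *v m + A0 *v fv z' - ?u = (A0 *v fv z' - ?u) + (mat 1 - D) *v m"
        by (simp add: algebra_simps)
      then show ?thesis by (simp only: A0fv)
    qed
    have "(fv z, fv z') \<in> crel (mat 1 - D) ?u \<longleftrightarrow>
      (\<exists>m\<in>Zv. fv z = fv z' + (mat 1 - D) *v m) \<or> (\<exists>m\<in>Zv. fv z = fv (sg t0 e0 z') + (mat 1 - D) *v m)"
    proof -
      have "(fv z, fv z') \<in> crel (mat 1 - D) ?u \<longleftrightarrow> fv z \<in> Zv \<and> fv z' \<in> Zv \<and>
        (\<exists>m\<in>Zv. fv z = fv z' + (mat 1 - D) *v m \<or> fv z = (mat 1 - D) *v m + A0 *v fv z' - ?u)"
        unfolding crel_def by simp
      then show ?thesis unfolding r using fv_img by blast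
    qed
    then show ?thesis using c3_iff[OF shp] by auto
  qed
  have cs: "crel (mat 1 - D) ?u \<subseteq> Zv \<times> Zv" by (auto simp: crel_def)
  note T = quot_transfer_card[OF fv_img _ cs, of ?ir]
  have T1: "card (UNIV // ?ir) = card (Zv // crel (mat 1 - D) ?u)"
    "finite (UNIV // ?ir) \<longleftrightarrow> finite (Zv // crel (mat 1 - D) ?u)" using T iff by auto
  show "finite (Zv // crel (mat 1 - D) ?u)" using T1 GL(1)[OF jodd Dl] by simp
  show "card (Zv // crel (mat 1 - D) ?u) = nat \<bar>(2-2*b)*(1-j) - (-2*c)*(-i)\<bar> + (if even e0 then 2 else 0)"
    using T1 GL(2)[OF jodd Dl] by simp
qed

lemma mat_sub_mul: "((A::real^3^3) - B) ** C = A ** C - B ** C"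
  by (simp add: vec_eq_iff matrix_matrix_mult_def sum_subtractf left_diff_distrib)
lemma mat_mul_sub: "(C::real^3^3) ** (A - B) = C ** A - C ** B"
  by (simp add: vec_eq_iff matrix_matrix_mult_def sum_subtractf right_diff_distrib)

lemma half_ereal: "(1/2::ereal) = ereal (1/2)"
  by (simp add: divide_ereal_def)

lemma abs_inf_not_minf: "abs_inf x \<noteq> - \<infinity>"
  unfolding abs_inf_def by auto

lemma holonomy_Gamma: "holonomy Gamma = {mat 1, A0}"
  unfolding holonomy_def Gamma_eq GS_def using Zv_0 by force

context autG begin

lemma main:
  "ereal_of_enat (reidemeister_number Gamma (xi (d, D))) =
           (1/2) * (\<Sum>A\<in>holonomy Gamma. abs_inf (det (mat 1 - A ** D)))
           + 4 * (if d $ 3 \<in> \<int> then 1 else 0)"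
proof -
  obtain a b c i j where sh: "a \<in> {1,-1}" "odd j"
   "D$1$1 = of_int a" "D$1$2 = of_int b" "D$1$3 = of_int c"
   "D$2$1 = 0" "D$2$2 = of_int (a + 2*b)" "D$2$3 = of_int (2*c)"
   "D$3$1 = 0" "D$3$2 = of_int i" "D$3$3 = of_int j" using D_shape by blast
  have sum: "(\<Sum>A\<in>holonomy Gamma. abs_inf (det (mat 1 - A ** D))) =
      abs_inf (det (mat 1 - D)) + abs_inf (det (mat 1 - A0 ** D))"
    unfolding holonomy_Gamma using A0_ne by (simp add: not_sym[OF A0_ne])
  have X1: "det (mat 1 - D) = of_int ((1-a)*((1-a-2*b)*(1-j) - 2*c*i))"
    unfolding det_3 by (simp add: sh(3-) algebra_simps)
  have X2: "det (mat 1 - A0 ** D) = of_int ((1-a)*((1+a+2*b)*(1+j) - 2*c*i))"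
    unfolding det_3 by (simp add: sh(3-) mmul3 algebra_simps)
  have ttZ: "tt \<in> Zv" using t_Zv unfolding tt_def .
  have tt: "tt$1 = d$2" "tt$2 = 2 * d$2" "tt$3 = 2 * d$3" unfolding tt_def by (simp_all add: A0v)
  have "tt$1 \<in> \<int>" "tt$3 \<in> \<int>" using ttZ unfolding Zv_def by blast+
  then have "d$2 \<in> \<int>" "2 * d$3 \<in> \<int>" using tt by simp_all
  then obtain t0 e0 where t0: "d$2 = of_int t0" and e0: "2 * d$3 = of_int e0" by (auto elim!: Ints_cases)
  have ttv: "tt = vector [of_int t0, of_int (2*t0), of_int e0]" using tt t0 e0 by (simp add: vec3_eq_iff)
  have mttv: "- tt = vector [of_int (-t0), of_int (2*(-t0)), of_int (-e0)]" using tt t0 e0 by (simp add: vec3_eq_iff)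
  have ev: "even e0 \<longleftrightarrow> d$3 \<in> \<int>"
  proof
    assume "even e0" then obtain k where "e0 = 2*k" by blast
    then have "d$3 = of_int k" using e0 by simp
    then show "d$3 \<in> \<int>" by simp
  next
    assume "d$3 \<in> \<int>" then obtain k where "d$3 = of_int k" by (auto elim!: Ints_cases)
    then have "real_of_int e0 = of_int (2*k)" using e0 by simp
    then have "e0 = 2*k" by (simp only: of_int_eq_iff)
    then show "even e0" by simp
  qed
  have comm1: "(mat 1 - D) ** A0 = A0 ** (mat 1 - D)"
    by (simp add: mat_sub_mul mat_mul_sub D_comm)
  have comm2: "(mat 1 - A0 ** D) ** A0 = A0 ** (mat 1 - A0 ** D)"
    by (simp add: mat_sub_mul mat_mul_sub D_comm matrix_mul_assoc[symmetric])
  show ?thesis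
  proof (cases "det (mat 1 - D) = 0 \<or> det (mat 1 - A0 ** D) = 0")
    case True
    have "infinite (Zv // crel (mat 1 - D) tt) \<or> infinite (Zv // crel (mat 1 - A0 ** D) (- tt))"
      using True crel_infinite[OF _ comm1 A0tt] crel_infinite[OF _ comm2, of "- tt"] A0tt
      by (auto simp: mv_neg)
    then have "infinite (Gamma // rr)" using count_split(1) by auto
    then have L: "ereal_of_enat (reidemeister_number Gamma (xi (d, D))) = \<infinity>"
      unfolding reidemeister_number_def by simp
    have S: "abs_inf (det (mat 1 - D)) + abs_inf (det (mat 1 - A0 ** D)) = \<infinity>"
      using True abs_inf_not_minf unfolding abs_inf_def by auto
    show ?thesis unfolding L sum S half_ereal by simp
  next
    case False
    then have a: "a = -1" using X1 sh(1) by auto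
    define b' where "b' = 1 - b"
    have shp1: "shp D b c i j" unfolding shp_def using sh a by simp
    have shp2: "shp (A0 ** D) b' (-c) (-i) (-j)" unfolding shp_def b'_def using sh a
      by (simp add: mmul3 algebra_simps)
    have R1: "det (mat 1 - D) = 2 * of_int ((2-2*b)*(1-j) - (-2*c)*(-i))"
      unfolding X1 a by (simp add: algebra_simps)
    have R2: "det (mat 1 - A0 ** D) = 2 * of_int ((2-2*b')*(1-(-j)) - (-2*(-c))*(-(-i)))"
      unfolding X2 a b'_def by (simp add: algebra_simps)
    have D1: "(2-2*b)*(1-j) - (-2*c)*(-i) \<noteq> 0"
    proof
      assume h0: "(2-2*b)*(1-j) - (-2*c)*(-i) = 0"
      from R1 have "det (mat 1 - D) = 2 * of_int 0" unfolding h0 .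
      then show False using False by simp
    qed
    have D2: "(2-2*b')*(1-(-j)) - (-2*(-c))*(-(-i)) \<noteq> 0"
    proof
      assume h0: "(2-2*b')*(1-(-j)) - (-2*(-c))*(-(-i)) = 0"
      from R2 have "det (mat 1 - A0 ** D) = 2 * of_int 0" unfolding h0 .
      then show False using False by simp
    qed
    have oj2: "odd (-j)" using sh(2) by simp
    note C1 = crel_int[OF shp1 sh(2) D1, of t0 e0, folded ttv]
    note C2 = crel_int[OF shp2 oj2 D2, of "-t0" "-e0", folded mttv]
    have fin: "finite (Gamma // rr)" using count_split(1) C1(1) C2(1) by simp
    have card: "card (Gamma // rr) = nat \<bar>(2-2*b)*(1-j) - (-2*c)*(-i)\<bar> + (if even e0 then 2 else 0)
       + (nat \<bar>(2-2*b')*(1-(-j)) - (-2*(-c))*(-(-i))\<bar> + (if even e0 then 2 else 0))"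
      using count_split(2)[OF fin] C1(2) C2(2) by simp
    define q1 where "q1 = (2-2*b)*(1-j) - (-2*c)*(-i)"
    define q2 where "q2 = (2-2*b')*(1-(-j)) - (-2*(-c))*(-(-i))"
    have card': "card (Gamma // rr) = nat \<bar>q1\<bar> + nat \<bar>q2\<bar> + (if even e0 then 4 else 0)"
      using card unfolding q1_def[symmetric] q2_def[symmetric] by simp
    have L: "ereal_of_enat (reidemeister_number Gamma (xi (d, D))) =
       ereal (\<bar>of_int q1\<bar> + \<bar>of_int q2\<bar> + (if even e0 then 4 else 0))"
      unfolding reidemeister_number_def using fin card' by simp
    have R1': "det (mat 1 - D) = 2 * of_int q1" using R1 unfolding q1_def .
    have R2': "det (mat 1 - A0 ** D) = 2 * of_int q2" using R2 unfolding q2_def .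
    have "q1 \<noteq> 0" "q2 \<noteq> 0" using D1 D2 unfolding q1_def q2_def by auto
    then show ?thesis unfolding L sum unfolding abs_inf_def R1' R2' ev[symmetric] half_ereal
      by (simp add: abs_mult)
  qed
qed

end

theorem proposition5p12:
  fixes d :: "real^3" and D :: "real^3^3"
  assumes "(d, D) \<in> Aff3"
    and "bij_betw (xi (d, D)) Gamma Gamma"
  shows "ereal_of_enat (reidemeister_number Gamma (xi (d, D))) =
           (1/2) * (\<Sum>A\<in>holonomy Gamma. abs_inf (det (mat 1 - A ** D)))
           + 4 * (if d $ 3 \<in> \<int> then 1 else 0)"
proof -
  interpret autG d D using assms unfolding Aff3_def by unfold_locales auto
  show ?thesis by (rule main)
qed

end
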